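(* Let $G$ be a non-discrete LCA group with dual $\Gamma$ and $V$ an open neighbourhood of $0\in\Gamma$ with compact closure $\bar V$. Then $\|\rho*\phi\|^{\bar V}\le\|\phi\|^{\bar V}\|\rho\|$ for all $\phi\in C^{\bar V}_{BSE}(\Gamma)$ and $\rho\in M(\Gamma)$.
   Context: $(x,\gamma)=\gamma(x)$. For $E\subseteq\Gamma$, $\mathrm{span}(E)$ is the span of the characters in $E$ as functions on $G$, each $p=\sum\hat p(\gamma)\gamma$ uniquely, $\|p\|_\infty=\sup_G|p|$. For $\phi\in C_b(\Gamma)$: $\|\phi\|^{\bar V,\gamma}=\sup\{|\sum_{\gamma'\in\bar V+\gamma}\hat p(\gamma')\phi(\gamma')|:p\in\mathrm{span}(\bar V+\gamma),\|p\|_\infty\le1\}$, $\|\phi\|^{\bar V}=\sup_\gamma\|\phi\|^{\bar V,\gamma}$, $C^{\bar V}_{BSE}(\Gamma)=\{\phi\in C_b(\Gamma):\|\phi\|^{\bar V}<\infty\}$. $M(\Gamma)$ is the space of bounded regular complex Borel measures on $\Gamma$ with total variation norm $\|\rho\|$, and $\rho*\phi(\gamma)=\int_\Gamma\phi(\gamma-\gamma'')\,d\rho(\gamma'')$. *)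

theory Defs
  imports "HOL-Analysis.Analysis" "HOL-Probability.Probability"
begin

definition LCA_group :: "'g::{topological_ab_group_add, t2_space} itself \<Rightarrow> bool" where
  "LCA_group _ \<longleftrightarrow> locally_compact_space (euclidean :: 'g topology)"

definition chars :: "('g::topological_ab_group_add \<Rightarrow> complex) set" where
  "chars = {\<gamma>. continuous_on UNIV \<gamma> \<and> (\<forall>x. cmod (\<gamma> x) = 1)
                 \<and> (\<forall>x y. \<gamma> (x + y) = \<gamma> x * \<gamma> y)}"

definition char_add :: "('g \<Rightarrow> complex) \<Rightarrow> ('g \<Rightarrow> complex) \<Rightarrow> ('g \<Rightarrow> complex)" where
  "char_add \<gamma> \<delta> = (\<lambda>x. \<gamma> x * \<delta> x)"

definition char_diff :: "('g \<Rightarrow> complex) \<Rightarrow> ('g \<Rightarrow> complex) \<Rightarrow> ('g \<Rightarrow> complex)" where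
  "char_diff \<gamma> \<delta> = (\<lambda>x. \<gamma> x * cnj (\<delta> x))"

definition char_zero :: "'g \<Rightarrow> complex" where
  "char_zero = (\<lambda>x. 1)"

definition dual_top :: "('g::topological_ab_group_add \<Rightarrow> complex) topology" where
  "dual_top = topology_generated_by
     {{\<gamma> \<in> chars. \<gamma> ` K \<subseteq> U} | K U. compact K \<and> open U}"

text \<open>Trigonometric polynomials \<open>p = \<Sum>\<^sub>\<gamma>' p\<^sup>^(\<gamma>') \<gamma>'\<close> with frequencies in \<open>E\<close> are given by a finite
  set \<open>F \<subseteq> E\<close> and coefficients \<open>c\<close>; then \<open>p\<^sup>^ = c\<close> on \<open>F\<close> and \<open>0\<close> elsewhere.\<close>

definition bse_norm_at ::
  "('g \<Rightarrow> complex) set \<Rightarrow> ('g \<Rightarrow> complex) \<Rightarrow> (('g \<Rightarrow> complex) \<Rightarrow> complex) \<Rightarrow> ereal" where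
  "bse_norm_at W \<gamma> \<phi> =
     (SUP Fc \<in> {(F, c). finite F \<and> F \<subseteq> (\<lambda>v. char_add v \<gamma>) ` W
                      \<and> (\<forall>x. cmod (\<Sum>\<gamma>'\<in>F. c \<gamma>' * \<gamma>' x) \<le> 1)}.
        ereal (cmod (\<Sum>\<gamma>'\<in>fst Fc. snd Fc \<gamma>' * \<phi> \<gamma>')))"

definition bse_norm ::
  "('g::topological_ab_group_add \<Rightarrow> complex) set \<Rightarrow> (('g \<Rightarrow> complex) \<Rightarrow> complex) \<Rightarrow> ereal" where
  "bse_norm W \<phi> = (SUP \<gamma> \<in> chars. bse_norm_at W \<gamma> \<phi>)"

definition Cb :: "(('g::topological_ab_group_add \<Rightarrow> complex) \<Rightarrow> complex) set" where
  "Cb = {\<phi>. continuous_map dual_top euclidean \<phi> \<and> bounded (\<phi> ` chars)}"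

definition C_BSE ::
  "('g::topological_ab_group_add \<Rightarrow> complex) set \<Rightarrow> (('g \<Rightarrow> complex) \<Rightarrow> complex) set" where
  "C_BSE W = {\<phi> \<in> Cb. bse_norm W \<phi> < \<infinity>}"

definition dual_borel_sets :: "('g::topological_ab_group_add \<Rightarrow> complex) set set" where
  "dual_borel_sets = sigma_sets chars {U. openin dual_top U}"

definition dual_regular :: "('g::topological_ab_group_add \<Rightarrow> complex) measure \<Rightarrow> bool" where
  "dual_regular \<nu> \<longleftrightarrow>
     (\<forall>A \<in> sets \<nu>.
        emeasure \<nu> A = (INF U \<in> {U. openin dual_top U \<and> A \<subseteq> U}. emeasure \<nu> U) \<and>
        emeasure \<nu> A = (SUP K \<in> {K. compactin dual_top K \<and> K \<subseteq> A}. emeasure \<nu> K))"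

text \<open>A complex measure \<open>\<rho> \<in> M(\<Gamma>)\<close> is represented in polar/density form
  \<open>d\<rho> = h d\<mu>\<close>, with \<open>\<mu>\<close> a finite Borel measure on \<open>\<Gamma>\<close> and \<open>h \<in> L\<^sup>1(\<mu>)\<close>;
  then \<open>|\<rho>| = |h| \<mu>\<close>, so regularity of \<open>\<rho>\<close> is regularity of \<open>density \<mu> |h|\<close>.
  Every element of \<open>M(\<Gamma>)\<close> arises this way (take \<open>\<mu> = |\<rho>|\<close>).\<close>

definition M_dual :: "(('g::topological_ab_group_add \<Rightarrow> complex) measure \<times> (('g \<Rightarrow> complex) \<Rightarrow> complex)) set" where
  "M_dual = {(\<mu>, h). finite_measure \<mu> \<and> space \<mu> = chars \<and> sets \<mu> = dual_borel_sets
              \<and> integrable \<mu> h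
              \<and> dual_regular (density \<mu> (\<lambda>\<gamma>. ennreal (cmod (h \<gamma>))))}"

definition tv_norm :: "('a measure \<times> ('a \<Rightarrow> complex)) \<Rightarrow> real" where
  "tv_norm \<rho> = (\<integral>\<gamma>. cmod (snd \<rho> \<gamma>) \<partial>fst \<rho>)"

definition conv :: "(('g \<Rightarrow> complex) measure \<times> (('g \<Rightarrow> complex) \<Rightarrow> complex))
                     \<Rightarrow> (('g \<Rightarrow> complex) \<Rightarrow> complex) \<Rightarrow> (('g \<Rightarrow> complex) \<Rightarrow> complex)" where
  "conv \<rho> \<phi> = (\<lambda>\<gamma>. \<integral>\<gamma>''. \<phi> (char_diff \<gamma> \<gamma>'') * snd \<rho> \<gamma>'' \<partial>fst \<rho>)"

end

theory Submission
  imports Defs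
begin

lemma topspace_dual_top: "topspace (dual_top :: ('g::topological_ab_group_add \<Rightarrow> complex) topology) = chars"
proof -
  have "chars \<in> {{\<gamma> \<in> chars. \<gamma> ` K \<subseteq> U} | K U. compact K \<and> open U} "
  proof -
    have "chars = {\<gamma> \<in> chars. \<gamma> ` ({}::'g set) \<subseteq> UNIV}" by auto
    then show ?thesis by blast
  qed
  then show ?thesis unfolding dual_top_def topology_generated_by_topspace by blast
qed

lemma char_diff_chars:
  assumes "a \<in> chars" "b \<in> chars" shows "char_diff a b \<in> chars"
  using assms unfolding chars_def char_diff_def
  by (auto intro!: continuous_intros simp: norm_mult)

lemma char_add_chars:
  assumes "a \<in> chars" "b \<in> chars" shows "char_add a b \<in> chars"
  using assms unfolding chars_def char_add_def
  by (auto intro!: continuous_intros simp: norm_mult)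

lemma char_zero_chars: "char_zero \<in> chars"
  unfolding chars_def char_zero_def by auto

lemma char_add_diff_cancel:
  assumes "b \<in> chars" shows "char_add (char_diff a b) b = a"
proof
  fix x
  have "cnj (b x) * b x = 1"
    using assms complex_norm_square[of "b x"] unfolding chars_def by (simp add: mult.commute)
  then show "char_add (char_diff a b) b x = a x"
    unfolding char_add_def char_diff_def by (simp add: mult.assoc)
qed

lemma char_diff_add_assoc: "char_diff (char_add v g) h = char_add v (char_diff g h)"
  unfolding char_add_def char_diff_def by (simp add: mult.assoc)


lemma transl_open:
  fixes g1 :: "'g::{topological_ab_group_add,t2_space} \<Rightarrow> complex"
  assumes g1: "g1 \<in> chars" and K: "compact K" and U: "open U"
  shows "openin dual_top {g\<in>chars. \<forall>x\<in>K. g1 x * cnj (g x) \<in> U}"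
proof (subst openin_subopen, intro ballI)
  fix g0 assume g0A: "g0 \<in> {g\<in>chars. \<forall>x\<in>K. g1 x * cnj (g x) \<in> U}"
  then have g0: "g0 \<in> chars" and g0U: "\<And>x. x \<in> K \<Longrightarrow> g1 x * cnj (g0 x) \<in> U" by auto
  have cg0: "continuous_on UNIV g0" and cg1: "continuous_on UNIV g1"
    using g0 g1 unfolding chars_def by auto
  have n1: "cmod (g1 x) = 1" for x using g1 unfolding chars_def by auto
  have "compact ((\<lambda>x. g1 x * cnj (g0 x)) ` K)"
    by (rule compact_continuous_image[OF _ K])
       (intro continuous_intros continuous_on_subset[OF cg0] continuous_on_subset[OF cg1]; simp)
  moreover have "(\<lambda>x. g1 x * cnj (g0 x)) ` K \<subseteq> U" using g0U by auto
  ultimately obtain e where e: "e > 0" and eU: "(\<Union>c\<in>(\<lambda>x. g1 x * cnj (g0 x)) ` K. ball c e) \<subseteq> U"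
    using compact_subset_open_imp_ball_epsilon_subset U by metis
  have "compact (g0 ` K)"
    by (rule compact_continuous_image[OF continuous_on_subset[OF cg0] K]) simp
  moreover have cov: "g0 ` K \<subseteq> (\<Union>d\<in>K. ball (g0 d) (e/3))" using e by force
  ultimately obtain D where D: "D \<subseteq> K" "finite D" and Dcov: "g0 ` K \<subseteq> (\<Union>d\<in>D. ball (g0 d) (e/3))"
    using compactE_image[of "g0 ` K" K "\<lambda>d. ball (g0 d) (e/3)"] by (metis open_ball)
  define Kd where "Kd d = K \<inter> g0 -` cball (g0 d) (e/3)" for d
  define N where "N = (\<Inter>d\<in>D. {\<gamma> \<in> chars. \<gamma> ` Kd d \<subseteq> ball (g0 d) (e/2)}) \<inter> topspace dual_top"
  have "openin dual_top N"
    unfolding N_def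
  proof (rule openin_INT[OF D(2)])
    fix d assume "d \<in> D"
    have "closed (g0 -` cball (g0 d) (e/3))"
      using continuous_closed_vimage[OF closed_cball, of g0] cg0 continuous_on_eq_continuous_at by blast
    then have "compact (Kd d)" unfolding Kd_def using K by blast
    then show "openin dual_top {\<gamma> \<in> chars. \<gamma> ` Kd d \<subseteq> ball (g0 d) (e/2)}"
      unfolding dual_top_def by (intro topology_generated_by_Basis) blast
  qed
  moreover have "g0 \<in> N"
    unfolding N_def topspace_dual_top using g0 e by (auto simp: Kd_def)
  moreover have "N \<subseteq> {g\<in>chars. \<forall>x\<in>K. g1 x * cnj (g x) \<in> U}"
  proof
    fix g assume gN: "g \<in> N"
    then have gc: "g \<in> chars" unfolding N_def topspace_dual_top by auto
    have "g1 x * cnj (g x) \<in> U" if x: "x \<in> K" for x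
    proof -
      obtain d where d: "d \<in> D" "g0 x \<in> ball (g0 d) (e/3)" using Dcov x by blast
      then have "x \<in> Kd d" unfolding Kd_def using x by auto
      then have "g x \<in> ball (g0 d) (e/2)" using gN d(1) unfolding N_def by blast
      then have "dist (g x) (g0 x) < e" using d(2) e
        using dist_triangle[of "g x" "g0 x" "g0 d"] by (simp add: dist_commute)
      then have "dist (g1 x * cnj (g0 x)) (g1 x * cnj (g x)) < e"
        by (simp add: dist_norm n1 norm_mult norm_minus_commute flip: right_diff_distrib complex_cnj_diff)
      then have "g1 x * cnj (g x) \<in> ball (g1 x * cnj (g0 x)) e" by simp
      then show ?thesis using eU x by blast
    qed
    then show "g \<in> {g\<in>chars. \<forall>x\<in>K. g1 x * cnj (g x) \<in> U}" using gc by auto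
  qed
  ultimately show "\<exists>T. openin dual_top T \<and> g0 \<in> T \<and> T \<subseteq> {g\<in>chars. \<forall>x\<in>K. g1 x * cnj (g x) \<in> U}"
    by blast
qed


lemma transl_cont:
  fixes g1 :: "'g::{topological_ab_group_add,t2_space} \<Rightarrow> complex"
  assumes g1: "g1 \<in> chars"
  shows "continuous_map dual_top dual_top (\<lambda>g. char_diff g1 g)"
proof -
  have "continuous_map dual_top (topology_generated_by
     {{\<gamma> \<in> chars. \<gamma> ` K \<subseteq> U} | K U. compact K \<and> open U}) (\<lambda>g. char_diff g1 g)"
  proof (rule continuous_on_generated_topo)
    fix W :: "('g \<Rightarrow> complex) set" assume "W \<in> {{\<gamma> \<in> chars. \<gamma> ` K \<subseteq> U} | K U. compact K \<and> open (U::complex set)}"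
    then obtain K U where KU: "compact (K::'g set)" "open U" "W = {\<gamma> \<in> chars. \<gamma> ` K \<subseteq> U}" by blast
    have "(\<lambda>g. char_diff g1 g) -` W \<inter> topspace dual_top = {g\<in>chars. \<forall>x\<in>K. g1 x * cnj (g x) \<in> U}"
      using char_diff_chars[OF g1] unfolding KU(3) topspace_dual_top by (auto simp: char_diff_def)
    then show "openin dual_top ((\<lambda>g. char_diff g1 g) -` W \<inter> topspace dual_top)"
      using transl_open[OF g1 KU(1,2)] by simp
  next
    have "chars = {\<gamma> \<in> chars. \<gamma> ` ({}::'g set) \<subseteq> UNIV}" by auto
    then have "chars \<subseteq> \<Union>{{\<gamma> \<in> chars. \<gamma> ` K \<subseteq> U} | K U. compact (K::'g set) \<and> open (U::complex set)}"
      by blast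
    then show "(\<lambda>g. char_diff g1 g) ` topspace dual_top \<subseteq> \<Union>{{\<gamma> \<in> chars. \<gamma> ` K \<subseteq> U} | K U. compact (K::'g set) \<and> open (U::complex set)}"
      using char_diff_chars[OF g1] unfolding topspace_dual_top by blast
  qed
  then show ?thesis unfolding dual_top_def .
qed

lemma cont_measurable:
  fixes f :: "('g::topological_ab_group_add \<Rightarrow> complex) \<Rightarrow> complex"
  assumes "continuous_map dual_top euclidean f" "space M = chars" "sets M = dual_borel_sets"
  shows "f \<in> borel_measurable M"
proof (rule borel_measurableI)
  fix S :: "complex set" assume "open S"
  then have "openin dual_top (f -` S \<inter> topspace dual_top)"
    using assms(1) by (simp add: continuous_map_open)
  then show "f -` S \<inter> space M \<in> sets M"
    unfolding assms(2,3) dual_borel_sets_def topspace_dual_top by (auto intro: sigma_sets.Basic)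
qed

lemma conv_integrable:
  fixes g1 :: "'g::{topological_ab_group_add,t2_space} \<Rightarrow> complex"
  assumes g1: "g1 \<in> chars" and phi: "\<phi> \<in> Cb" and rho: "(\<mu>, h) \<in> M_dual"
  shows "integrable \<mu> (\<lambda>g. \<phi> (char_diff g1 g) * h g)"
proof -
  have sp: "space \<mu> = chars" "sets \<mu> = dual_borel_sets" and hi: "integrable \<mu> h"
    using rho unfolding M_dual_def by auto
  obtain B where B: "\<And>g. g \<in> chars \<Longrightarrow> cmod (\<phi> g) \<le> B"
    using phi unfolding Cb_def bounded_iff by auto
  have "continuous_map dual_top euclidean (\<lambda>g. \<phi> (char_diff g1 g))"
    using continuous_map_compose[OF transl_cont[OF g1], of euclidean \<phi>] phi
    unfolding Cb_def by (simp add: o_def)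
  then have m: "(\<lambda>g. \<phi> (char_diff g1 g)) \<in> borel_measurable \<mu>"
    using cont_measurable sp by blast
  have i1: "integrable \<mu> (\<lambda>g. complex_of_real B * h g)" using hi by simp
  have m2: "(\<lambda>g. \<phi> (char_diff g1 g) * h g) \<in> borel_measurable \<mu>"
    using m borel_measurable_integrable[OF hi] by measurable
  have ae: "AE x in \<mu>. norm (\<phi> (char_diff g1 x) * h x) \<le> norm (complex_of_real B * h x)"
  proof (rule AE_I2)
    fix x assume "x \<in> space \<mu>"
    then have "cmod (\<phi> (char_diff g1 x)) \<le> B" using B char_diff_chars[OF g1] sp by auto
    then show "norm (\<phi> (char_diff g1 x) * h x) \<le> norm (complex_of_real B * h x)"
      by (simp add: norm_mult mult_right_mono)
  qed
  show ?thesis by (rule Bochner_Integration.integrable_bound[OF i1 m2 ae])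
qed


lemma pointwise_bound:
  fixes \<phi> :: "('g::topological_ab_group_add \<Rightarrow> complex) \<Rightarrow> complex"
  assumes g: "\<gamma> \<in> chars" and g2: "\<gamma>2 \<in> chars" and F: "finite F"
    and FW: "F \<subseteq> (\<lambda>v. char_add v \<gamma>) ` W"
    and p: "\<forall>x. cmod (\<Sum>\<gamma>'\<in>F. c \<gamma>' * \<gamma>' x) \<le> 1"
  shows "ereal (cmod (\<Sum>a\<in>F. c a * \<phi> (char_diff a \<gamma>2))) \<le> bse_norm W \<phi>"
proof -
  define d0 where "d0 = char_diff \<gamma> \<gamma>2"
  define F' where "F' = (\<lambda>a. char_diff a \<gamma>2) ` F"
  define c' where "c' = (\<lambda>d. c (char_add d \<gamma>2))"
  have inj: "inj_on (\<lambda>a. char_diff a \<gamma>2) F"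
    by (rule inj_on_inverseI[where g="\<lambda>d. char_add d \<gamma>2"]) (simp add: char_add_diff_cancel[OF g2])
  have s1: "(\<Sum>d\<in>F'. c' d * \<phi> d) = (\<Sum>a\<in>F. c a * \<phi> (char_diff a \<gamma>2))"
    unfolding F'_def c'_def by (simp add: sum.reindex[OF inj] char_add_diff_cancel[OF g2])
  have p': "\<forall>x. cmod (\<Sum>d\<in>F'. c' d * d x) \<le> 1"
  proof
    fix x
    have n2: "cmod (cnj (\<gamma>2 x)) = 1" using g2 unfolding chars_def by auto
    have "(\<Sum>d\<in>F'. c' d * d x) = (\<Sum>a\<in>F. c a * (a x * cnj (\<gamma>2 x)))"
      unfolding F'_def c'_def sum.reindex[OF inj] o_def char_add_diff_cancel[OF g2]
      by (simp add: char_diff_def)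
    also have "\<dots> = (\<Sum>a\<in>F. c a * a x) * cnj (\<gamma>2 x)"
      by (simp add: sum_distrib_right mult.assoc)
    finally show "cmod (\<Sum>d\<in>F'. c' d * d x) \<le> 1"
      using p n2 by (simp add: norm_mult)
  qed
  have sub: "F' \<subseteq> (\<lambda>v. char_add v d0) ` W"
    using FW unfolding F'_def d0_def by (auto simp: char_diff_add_assoc)
  have "(F', c') \<in> {(F, c). finite F \<and> F \<subseteq> (\<lambda>v. char_add v d0) ` W
                      \<and> (\<forall>x. cmod (\<Sum>\<gamma>'\<in>F. c \<gamma>' * \<gamma>' x) \<le> 1)}"
    using F sub p' unfolding F'_def by auto
  then have "ereal (cmod (\<Sum>d\<in>F'. c' d * \<phi> d)) \<le> bse_norm_at W d0 \<phi>"
    unfolding bse_norm_at_def by (rule SUP_upper2) simp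
  also have "\<dots> \<le> bse_norm W \<phi>"
    unfolding bse_norm_def d0_def by (rule SUP_upper) (rule char_diff_chars[OF g g2])
  finally show ?thesis using s1 by simp
qed


theorem lemma7p3:
  fixes V :: "('g::{topological_ab_group_add, t2_space} \<Rightarrow> complex) set"
  assumes "LCA_group TYPE('g)"
    and "\<not> (\<forall>U::'g set. open U)"
    and "openin dual_top V" and "char_zero \<in> V"
    and "compactin dual_top (dual_top closure_of V)"
  shows "\<forall>\<phi> \<in> C_BSE (dual_top closure_of V). \<forall>\<rho> \<in> M_dual.
           bse_norm (dual_top closure_of V) (conv \<rho> \<phi>)
             \<le> bse_norm (dual_top closure_of V) \<phi> * ereal (tv_norm \<rho>)"
proof (intro ballI)
  fix \<phi> :: "('g \<Rightarrow> complex) \<Rightarrow> complex" and \<rho> :: "('g \<Rightarrow> complex) measure \<times> (('g \<Rightarrow> complex) \<Rightarrow> complex)"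
  assume phiB: "\<phi> \<in> C_BSE (dual_top closure_of V)" and rhoM: "\<rho> \<in> M_dual"
  define W where "W = dual_top closure_of V"
  obtain \<mu> h where rho: "\<rho> = (\<mu>, h)" by (cases \<rho>)
  have Wc: "W \<subseteq> chars" unfolding W_def using closure_of_subset_topspace topspace_dual_top by metis
  have phiC: "\<phi> \<in> Cb" and Bfin: "bse_norm W \<phi> < \<infinity>" using phiB unfolding C_BSE_def W_def by auto
  have B0: "ereal (cmod (\<Sum>a\<in>{}. (\<lambda>_. 0) a * \<phi> (char_diff a char_zero))) \<le> bse_norm W \<phi>"
    by (rule pointwise_bound[OF char_zero_chars char_zero_chars]) auto
  then have B0': "0 \<le> bse_norm W \<phi>" by (simp add: zero_ereal_def)
  define b where "b = real_of_ereal (bse_norm W \<phi>)"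
  have Bb: "bse_norm W \<phi> = ereal b" unfolding b_def using B0' Bfin by (intro ereal_real'[symmetric]) auto
  have b0: "0 \<le> b" using B0' Bb by simp
  have rhoM': "(\<mu>, h) \<in> M_dual" using rhoM rho by simp
  have sp: "space \<mu> = chars" and hi: "integrable \<mu> h" using rhoM' unfolding M_dual_def by auto
  have tv: "tv_norm \<rho> = (\<integral>g. cmod (h g) \<partial>\<mu>)" unfolding tv_norm_def rho by simp
  have key: "ereal (cmod (\<Sum>a\<in>F. c a * conv \<rho> \<phi> a)) \<le> ereal (b * tv_norm \<rho>)"
    if g: "\<gamma> \<in> chars" and F: "finite F" and FW: "F \<subseteq> (\<lambda>v. char_add v \<gamma>) ` W"
      and p: "\<forall>x. cmod (\<Sum>\<gamma>'\<in>F. c \<gamma>' * \<gamma>' x) \<le> 1" for \<gamma> F c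
  proof -
    have Fc: "a \<in> chars" if "a \<in> F" for a using that FW Wc char_add_chars[OF _ g] by blast
    have "(\<Sum>a\<in>F. c a * conv \<rho> \<phi> a) = (\<Sum>a\<in>F. \<integral>g. c a * (\<phi> (char_diff a g) * h g) \<partial>\<mu>)"
      unfolding conv_def rho by simp
    also have "\<dots> = (\<integral>g. (\<Sum>a\<in>F. c a * (\<phi> (char_diff a g) * h g)) \<partial>\<mu>)"
      by (subst Bochner_Integration.integral_sum) (use conv_integrable[OF Fc phiC rhoM'] in auto)
    finally have eq: "(\<Sum>a\<in>F. c a * conv \<rho> \<phi> a) = (\<integral>g. (\<Sum>a\<in>F. c a * (\<phi> (char_diff a g) * h g)) \<partial>\<mu>)" .
    have "cmod (\<Sum>a\<in>F. c a * conv \<rho> \<phi> a) \<le> (\<integral>g. cmod (\<Sum>a\<in>F. c a * (\<phi> (char_diff a g) * h g)) \<partial>\<mu>)"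
      unfolding eq by (rule integral_norm_bound)
    also have "\<dots> \<le> (\<integral>g. b * cmod (h g) \<partial>\<mu>)"
    proof (rule integral_mono')
      show "integrable \<mu> (\<lambda>g. b * cmod (h g))" using hi by simp
      fix g assume "g \<in> space \<mu>"
      then have g2: "g \<in> chars" using sp by simp
      have "ereal (cmod (\<Sum>a\<in>F. c a * \<phi> (char_diff a g))) \<le> ereal b"
        using pointwise_bound[OF g g2 F FW p, of \<phi>] Bb by simp
      then have "cmod (\<Sum>a\<in>F. c a * \<phi> (char_diff a g)) \<le> b" by simp
      moreover have "(\<Sum>a\<in>F. c a * (\<phi> (char_diff a g) * h g)) = (\<Sum>a\<in>F. c a * \<phi> (char_diff a g)) * h g"
        by (simp add: sum_distrib_right mult.assoc)
      ultimately show "cmod (\<Sum>a\<in>F. c a * (\<phi> (char_diff a g) * h g)) \<le> b * cmod (h g)"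
        by (simp add: norm_mult mult_right_mono)
      show "0 \<le> b * cmod (h g)" using b0 by simp
    qed
    also have "\<dots> = b * tv_norm \<rho>" unfolding tv by simp
    finally show ?thesis by simp
  qed
  have "bse_norm W (conv \<rho> \<phi>) \<le> ereal (b * tv_norm \<rho>)"
    unfolding bse_norm_def bse_norm_at_def
    by (intro SUP_least) (auto dest!: key)
  also have "\<dots> = bse_norm W \<phi> * ereal (tv_norm \<rho>)" using Bb by simp
  finally show "bse_norm (dual_top closure_of V) (conv \<rho> \<phi>)
             \<le> bse_norm (dual_top closure_of V) \<phi> * ereal (tv_norm \<rho>)" unfolding W_def .
qed

end
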